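(* Let $0\le E^C_1\le E^C_2\le\cdots$ be a non-decreasing sequence of nonnegative reals with $\lim_{n\to\infty}E^C_n=\infty$, let $\beta>0$, $\gamma=e^{-\beta}\in(0,1)$, and let $E\ge E^C_1$. Let $$\varepsilon_C=\inf\Big\{\sum_{j=1}^\infty\omega_je^{-\beta E^C_j}\ :\ \omega_j\ge0\ \forall j,\ \sum_{j=1}^\infty\omega_j=1,\ \sum_{j=1}^\infty E^C_j\omega_j\le E\Big\}.$$ For $0<W<1$ let $j(W)=\min\{j\ge1: E^C_{j+1}>E/(1-W)\}$. Then $$\varepsilon_C\ \ge\ \sup_{W\in(0,1)} W\,\gamma^{E^C_{j(W)}}>0.$$ *)

theory Defs
  imports Complex_Main
begin

text \<open>Sequences are indexed from 1; the value at index 0 is irrelevant.\<close>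

definition epsC :: "(nat \<Rightarrow> real) \<Rightarrow> real \<Rightarrow> real \<Rightarrow> real" where
  "epsC EC \<beta> E = Inf {s. \<exists>\<omega> :: nat \<Rightarrow> real.
      (\<forall>j\<ge>1. \<omega> j \<ge> 0) \<and>
      (\<lambda>j. \<omega> (Suc j)) sums 1 \<and>
      summable (\<lambda>j. EC (Suc j) * \<omega> (Suc j)) \<and>
      (\<Sum>j. EC (Suc j) * \<omega> (Suc j)) \<le> E \<and>
      (\<lambda>j. \<omega> (Suc j) * exp (- \<beta> * EC (Suc j))) sums s}"

definition jW :: "(nat \<Rightarrow> real) \<Rightarrow> real \<Rightarrow> real \<Rightarrow> nat" where
  "jW EC E W = (LEAST j. j \<ge> 1 \<and> EC (Suc j) > E / (1 - W))"

end

theory Submission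
  imports Defs
begin

lemma mono_EC:
  assumes "\<And>j. j \<ge> 1 \<Longrightarrow> EC j \<le> EC (Suc j)" "1 \<le> i" "i \<le> j"
  shows "EC i \<le> (EC j :: real)"
  using assms(3)
proof (induction j rule: dec_induct)
  case base then show ?case by simp
next
  case (step k) then show ?case using assms(1)[of k] assms(2) by linarith
qed

lemma key:
  fixes a :: "nat \<Rightarrow> real" and EC :: "nat \<Rightarrow> real"
  assumes W: "0 < W" "W < 1" and E0: "E \<ge> 0" and b: "\<beta> > 0"
    and JM: "EC (Suc J) > E / (1 - W)"
    and lo: "\<And>j. j < J \<Longrightarrow> EC (Suc j) \<le> EC J"
    and hi: "\<And>j. j \<ge> J \<Longrightarrow> EC (Suc J) \<le> EC (Suc j)"
    and ECnn: "\<And>j. EC (Suc j) \<ge> 0"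
    and an: "\<And>j. a j \<ge> 0" and a1: "a sums 1"
    and se: "summable (\<lambda>j. EC (Suc j) * a j)"
    and sE: "(\<Sum>j. EC (Suc j) * a j) \<le> E"
    and ss: "(\<lambda>j. a j * exp (- \<beta> * EC (Suc j))) sums s"
  shows "W * exp (- \<beta> * EC J) \<le> s"
proof -
  define M where "M = EC (Suc J)"
  define P where "P = (\<Sum>j<J. a j)"
  have T0: "E / (1 - W) \<ge> 0" using W E0 by simp
  have Mpos: "M > 0" using JM T0 M_def by linarith
  have tail: "(\<lambda>j. a (j + J)) sums (1 - P)"
    using sums_iff_shift[of a J "1 - P"] a1 P_def by simp
  have se2: "(\<lambda>j. EC (Suc (j + J)) * a (j + J)) sums ((\<Sum>j. EC (Suc j) * a j) - (\<Sum>j<J. EC (Suc j) * a j))"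
    using sums_iff_shift[of "\<lambda>j. EC (Suc j) * a j" J] se summable_sums by fastforce
  have "M * (1 - P) = (\<Sum>j. M * a (j + J))"
    using tail sums_mult sums_unique by (metis)
  also have "\<dots> \<le> (\<Sum>j. EC (Suc (j + J)) * a (j + J))"
    apply (rule suminf_le)
    using hi an M_def apply (simp add: mult_right_mono)
    using tail summable_mult sums_summable apply blast
    using se2 sums_summable by blast
  also have "\<dots> = (\<Sum>j. EC (Suc j) * a j) - (\<Sum>j<J. EC (Suc j) * a j)"
    using se2 sums_unique by metis
  also have "\<dots> \<le> E"
  proof -
    have "(\<Sum>j<J. EC (Suc j) * a j) \<ge> 0" by (intro sum_nonneg) (simp add: ECnn an)
    then show ?thesis using sE by linarith
  qed
  finally have h1: "M * (1 - P) \<le> E" .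
  have "E < M * (1 - W)" using JM W M_def by (simp add: divide_less_eq mult.commute)
  with h1 have "M * (1 - P) < M * (1 - W)" by linarith
  hence "1 - P < 1 - W" using Mpos by (simp add: mult_less_cancel_left)
  hence PW: "W \<le> P" by linarith
  have "W * exp (- \<beta> * EC J) \<le> P * exp (- \<beta> * EC J)"
    using PW by (simp add: mult_right_mono)
  also have "\<dots> = (\<Sum>j<J. a j * exp (- \<beta> * EC J))" by (simp add: P_def sum_distrib_right)
  also have "\<dots> \<le> (\<Sum>j<J. a j * exp (- \<beta> * EC (Suc j)))"
    apply (rule sum_mono)
    using lo b an by (simp add: mult_left_mono)
  also have "\<dots> \<le> s"
    using sum_le_suminf[of "\<lambda>j. a j * exp (- \<beta> * EC (Suc j))" "{..<J}"] ss an
      sums_summable sums_unique by fastforce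
  finally show ?thesis .
qed

theorem mainTheorem7:
  fixes EC :: "nat \<Rightarrow> real" and \<beta> \<gamma> E :: real
  assumes "0 \<le> EC 1"
    and "\<And>j. j \<ge> 1 \<Longrightarrow> EC j \<le> EC (Suc j)"
    and "filterlim EC at_top sequentially"
    and "\<beta> > 0" and "\<gamma> = exp (- \<beta>)"
    and "E \<ge> EC 1"
  shows "(SUP W\<in>{0<..<1::real}. W * \<gamma> powr EC (jW EC E W)) \<le> epsC EC \<beta> E
       \<and> (SUP W\<in>{0<..<1::real}. W * \<gamma> powr EC (jW EC E W)) > 0"
proof -
  note mono = mono_EC[where EC=EC, OF assms(2)]
  have ECnn: "\<And>j. j \<ge> 1 \<Longrightarrow> EC j \<ge> 0" using mono assms(1) by (meson order_trans order_refl)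
  have E0: "E \<ge> 0" using assms(1,6) by linarith
  have pw: "\<And>x. \<gamma> powr x = exp (- \<beta> * x)" using assms(5) by (simp add: powr_def)
  have jWp: "jW EC E W \<ge> 1 \<and> EC (Suc (jW EC E W)) > E / (1 - W)" for W
  proof -
    have "\<forall>\<^sub>F n in sequentially. EC n > E / (1 - W)"
      using assms(3) by (simp add: filterlim_at_top_dense)
    moreover have "\<forall>\<^sub>F n in sequentially. n \<ge> 2" by (simp add: eventually_ge_at_top)
    ultimately obtain n where n: "EC n > E / (1 - W)" "n \<ge> 2"
      by (metis (mono_tags, lifting) eventually_conj_iff eventually_sequentially order_refl)
    have "n - 1 \<ge> 1 \<and> EC (Suc (n - 1)) > E / (1 - W)" using n by (simp add: Suc_diff_1)
    then show ?thesis unfolding jW_def by (rule LeastI)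
  qed
  let ?S = "{s. \<exists>\<omega> :: nat \<Rightarrow> real.
      (\<forall>j\<ge>1. \<omega> j \<ge> 0) \<and>
      (\<lambda>j. \<omega> (Suc j)) sums 1 \<and>
      summable (\<lambda>j. EC (Suc j) * \<omega> (Suc j)) \<and>
      (\<Sum>j. EC (Suc j) * \<omega> (Suc j)) \<le> E \<and>
      (\<lambda>j. \<omega> (Suc j) * exp (- \<beta> * EC (Suc j))) sums s}"
  have lb: "W * \<gamma> powr EC (jW EC E W) \<le> s" if W: "0 < W" "W < 1" and s: "s \<in> ?S" for W s
  proof -
    obtain \<omega> where om: "\<forall>j\<ge>1. \<omega> j \<ge> 0" "(\<lambda>j. \<omega> (Suc j)) sums 1"
      "summable (\<lambda>j. EC (Suc j) * \<omega> (Suc j))" "(\<Sum>j. EC (Suc j) * \<omega> (Suc j)) \<le> E"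
      "(\<lambda>j. \<omega> (Suc j) * exp (- \<beta> * EC (Suc j))) sums s" using s by blast
    define J where "J = jW EC E W"
    have J: "J \<ge> 1" "EC (Suc J) > E / (1 - W)" using jWp J_def by auto
    have lo: "\<And>j. j < J \<Longrightarrow> EC (Suc j) \<le> EC J" using mono by simp
    have hi: "\<And>j. j \<ge> J \<Longrightarrow> EC (Suc J) \<le> EC (Suc j)" using mono by simp
    have "W * exp (- \<beta> * EC J) \<le> s"
      apply (rule key[OF W E0 assms(4) J(2) lo hi _ _ om(2) om(3) om(4) om(5)])
      using ECnn om(1) by auto
    then show ?thesis using pw J_def by simp
  qed
  have ne: "?S \<noteq> {}"
  proof -
    define \<omega> where "\<omega> = (\<lambda>j::nat. if j = 1 then 1 else (0::real))"
    have z: "(\<lambda>j. \<omega> (Suc j)) = (\<lambda>j. if j = 0 then 1 else 0)" by (auto simp: \<omega>_def)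
    have z2: "(\<lambda>j. EC (Suc j) * \<omega> (Suc j)) = (\<lambda>j. if j = 0 then EC 1 else 0)" by (auto simp: \<omega>_def)
    have z3: "(\<lambda>j. \<omega> (Suc j) * exp (- \<beta> * EC (Suc j))) = (\<lambda>j. if j = 0 then exp (- \<beta> * EC 1) else 0)"
      by (auto simp: \<omega>_def)
    have z4: "(\<Sum>j. if j = 0 then EC 1 else 0) = EC 1"
      using sums_single[of 0 "\<lambda>_. EC 1"] sums_unique by fastforce
    have "exp (- \<beta> * EC 1) \<in> ?S"
      apply (simp only: mem_Collect_eq)
      apply (rule exI[of _ \<omega>])
      apply (simp only: z z2 z3)
      using assms(6) z4 by (auto simp: \<omega>_def sums_single[of 0 "\<lambda>_. 1::real", simplified]
          sums_single[of 0 "\<lambda>_. exp (- \<beta> * EC 1)", simplified]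
          sums_summable[OF sums_single[of 0 "\<lambda>_. EC 1", simplified]]
          suminf_finite[of "{0}"])
    then show ?thesis by blast
  qed
  have part1: "(SUP W\<in>{0<..<1::real}. W * \<gamma> powr EC (jW EC E W)) \<le> epsC EC \<beta> E"
    unfolding epsC_def
  proof (rule cSUP_least)
    show "{0<..<1::real} \<noteq> {}" by simp
    fix W :: real assume "W \<in> {0<..<1}"
    then show "W * \<gamma> powr EC (jW EC E W) \<le> Inf ?S"
      using lb by (intro cInf_greatest[OF ne]) auto
  qed
  have bdd: "bdd_above ((\<lambda>W. W * \<gamma> powr EC (jW EC E W)) ` {0<..<1::real})"
  proof (rule bdd_aboveI2)
    fix W :: real assume W: "W \<in> {0<..<1}"
    have "EC (jW EC E W) \<ge> 0" using ECnn jWp by blast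
    hence "exp (- \<beta> * EC (jW EC E W)) \<le> 1" using assms(4) by simp
    then show "W * \<gamma> powr EC (jW EC E W) \<le> 1" using W pw
      by (simp add: mult_le_one less_imp_le)
  qed
  have "0 < (1/2::real) * \<gamma> powr EC (jW EC E (1/2))" using pw by simp
  also have "\<dots> \<le> (SUP W\<in>{0<..<1::real}. W * \<gamma> powr EC (jW EC E W))"
    by (rule cSUP_upper[OF _ bdd]) auto
  finally show ?thesis using part1 by simp
qed

end
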